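(* For every $n\in\mathbb{N}$ and every $k\in\{0,1,\dots,n\}$, $|B_{n,k}|=(n+1)^{n-1}$.
   Context: For $n\in\mathbb{N}$ let $[n]=\{1,\dots,n\}$ and $PP_n=[n]^n$. Given $\alpha=(a_1,\dots,a_n)\in PP_n$ and an integer $k\ge0$, park cars $c_1,\dots,c_n$ in order on a street whose spots are indexed by all integers, initially all empty, with the unrestricted $k$-Naples rule: car $c_i$ parks at $a_i$ if empty; otherwise it checks spots $a_i-1,a_i-2,\dots,a_i-k$ in this order (including spots numbered $\le 0$) and parks in the first empty one; if all are occupied it drives east and parks in the first empty spot numbered greater than $a_i$. The set $B_{n,k}$ of contained parking functions consists of those $\alpha\in PP_n$ for which, under this process, every car parks in a spot belonging to $[n]$ (equivalently: all cars park in spots $1,\dots,n$ and no car ever occupies spot $0$ or any spot outside $[n]$). *)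

theory Defs
  imports Main
begin

text \<open>Unrestricted k-Naples parking on a street indexed by all integers.
  Given the set occ of occupied spots and a preference a, return the spot
  where the next car parks.\<close>

definition naples_spot :: "nat \<Rightarrow> int set \<Rightarrow> int \<Rightarrow> int" where
  "naples_spot k occ a =
     (if a \<notin> occ then a
      else if (\<exists>j\<in>{1..int k}. a - j \<notin> occ)
           then a - (LEAST j. j \<in> {1..int k} \<and> a - j \<notin> occ)
      else (LEAST s. s > a \<and> s \<notin> occ))"

fun naples_park :: "nat \<Rightarrow> int set \<Rightarrow> int list \<Rightarrow> int list" where
  "naples_park k occ [] = []"
| "naples_park k occ (a # as) =
     (let s = naples_spot k occ a in s # naples_park k (insert s occ) as)"

definition PP :: "nat \<Rightarrow> int list set" where
  "PP n = {\<alpha>. length \<alpha> = n \<and> (\<forall>a\<in>set \<alpha>. 1 \<le> a \<and> a \<le> int n)}"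

definition B :: "nat \<Rightarrow> nat \<Rightarrow> int list set" where
  "B n k = {\<alpha> \<in> PP n. \<forall>s\<in>set (naples_park k {} \<alpha>). 1 \<le> s \<and> s \<le> int n}"

end

theory Submission
  imports Defs
begin

lemma int_least:
  fixes P :: "int \<Rightarrow> bool"
  assumes "P x" "\<And>y. P y \<Longrightarrow> b \<le> y"
  shows "P (LEAST y. P y) \<and> (\<forall>y. P y \<longrightarrow> (LEAST y. P y) \<le> y)"
proof -
  define n0 where "n0 = (LEAST n::nat. P (b + int n))"
  have "b \<le> x" using assms by blast
  then have px: "P (b + int (nat (x - b)))" using assms by simp
  hence p0: "P (b + int n0)" unfolding n0_def by (rule LeastI)
  have min: "\<forall>y. P y \<longrightarrow> b + int n0 \<le> y"
  proof (intro allI impI)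
    fix y assume "P y"
    hence "b \<le> y" using assms(2) by blast
    hence "P (b + int (nat (y - b)))" using \<open>P y\<close> by simp
    hence "n0 \<le> nat (y - b)" unfolding n0_def by (rule Least_le)
    thus "b + int n0 \<le> y" using \<open>b \<le> y\<close> by linarith
  qed
  have "(LEAST y. P y) = b + int n0" by (rule Least_equality) (use p0 min in auto)
  thus ?thesis using p0 min by simp
qed

definition cspot :: "int \<Rightarrow> nat \<Rightarrow> int set \<Rightarrow> int \<Rightarrow> int" where
  "cspot m k occ a = (if a mod m \<notin> occ then a mod m
     else if (\<exists>j\<in>{1..int k}. (a - j) mod m \<notin> occ)
       then (a - (LEAST j. j \<in> {1..int k} \<and> (a - j) mod m \<notin> occ)) mod m
     else (a + (LEAST j. j > 0 \<and> (a + j) mod m \<notin> occ)) mod m)"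

fun cpark :: "int \<Rightarrow> nat \<Rightarrow> int set \<Rightarrow> int list \<Rightarrow> int list" where
  "cpark m k occ [] = []"
| "cpark m k occ (a # as) =
     (let s = cspot m k occ a in s # cpark m k (insert s occ) as)"

lemma step:
  assumes kn: "k \<le> n" and a: "1 \<le> a" "a \<le> int n" and occ: "occ \<subseteq> {1..int n}"
  defines "s \<equiv> naples_spot k occ a" and "t \<equiv> cspot (int n + 1) k occ a"
  shows "((1 \<le> s \<and> s \<le> int n) \<longleftrightarrow> t \<noteq> 0) \<and> (1 \<le> s \<and> s \<le> int n \<longrightarrow> s = t)"
proof -
  let ?m = "int n + 1"
  have amod: "a mod ?m = a" using a by simp
  consider (c1) "a \<notin> occ" | (c2) "a \<in> occ" "\<exists>j\<in>{1..int k}. a - j \<notin> occ"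
    | (c3) "a \<in> occ" "\<not>(\<exists>j\<in>{1..int k}. a - j \<notin> occ)" by blast
  then show ?thesis
  proof cases
    case c1
    then have "s = a" "t = a" unfolding s_def t_def naples_spot_def cspot_def using amod by auto
    then show ?thesis using a by auto
  next
    case c2
    define P where "P j \<longleftrightarrow> j \<in> {1..int k} \<and> a - j \<notin> occ" for j
    define Q where "Q j \<longleftrightarrow> j \<in> {1..int k} \<and> (a - j) mod ?m \<notin> occ" for j
    have PQ: "P j \<longleftrightarrow> Q j" if "j \<le> a" for j
    proof -
      have "j \<in> {1..int k} \<Longrightarrow> (a - j) mod ?m = a - j" using that a by simp
      thus ?thesis unfolding P_def Q_def by auto
    qed
    obtain j1 where pj1: "P j1" using c2 P_def by auto
    have exle: "\<exists>j\<le>a. P j"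
    proof (cases "j1 \<le> a")
      case True then show ?thesis using pj1 by blast
    next
      case False
      then have "P a" using pj1 a occ unfolding P_def by auto
      then show ?thesis by blast
    qed
    define j0 where "j0 = (LEAST j. P j)"
    have l: "P j0 \<and> (\<forall>y. P y \<longrightarrow> j0 \<le> y)" unfolding j0_def
      by (rule int_least[where b=1]) (use pj1 P_def in auto)
    have j0a: "j0 \<le> a" using exle l by force
    have qj0: "Q j0" using PQ j0a l by blast
    have lq: "(LEAST j. Q j) = j0"
    proof (rule Least_equality)
      show "Q j0" by (rule qj0)
    next
      fix y assume "Q y"
      show "j0 \<le> y"
      proof (rule ccontr)
        assume "\<not> j0 \<le> y"
        then have "P y" using PQ[of y] j0a \<open>Q y\<close> by auto
        then show False using l \<open>\<not> j0 \<le> y\<close> by auto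
      qed
    qed
    have s: "s = a - j0" unfolding s_def naples_spot_def j0_def P_def using c2 by simp
    have "\<exists>j\<in>{1..int k}. (a - j) mod ?m \<notin> occ" using qj0 Q_def by blast
    then have "t = (a - j0) mod ?m" unfolding t_def cspot_def using c2 amod lq[unfolded Q_def]
      by simp
    also have "\<dots> = a - j0"
    proof -
      have "1 \<le> j0" using l P_def by simp
      then show ?thesis using j0a a by (intro mod_pos_pos_trivial) auto
    qed
    finally have t: "t = a - j0" .
    show ?thesis using s t j0a l P_def a by auto
  next
    case c3
    have c3': "\<not>(\<exists>j\<in>{1..int k}. (a - j) mod ?m \<notin> occ)"
    proof
      assume "\<exists>j\<in>{1..int k}. (a - j) mod ?m \<notin> occ"
      then obtain j where j: "j \<in> {1..int k}" "(a - j) mod ?m \<notin> occ" by blast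
      then have "a - j \<in> occ" using c3 by blast
      then have "1 \<le> a - j" "a - j \<le> int n" using occ by auto
      then have "(a - j) mod ?m = a - j" by simp
      then show False using j \<open>a - j \<in> occ\<close> by simp
    qed
    define R where "R x \<longleftrightarrow> a < x \<and> x \<notin> occ" for x
    define s0 where "s0 = (LEAST x. R x)"
    have l: "R s0 \<and> (\<forall>y. R y \<longrightarrow> s0 \<le> y)" unfolding s0_def
      by (rule int_least[where x="int n + 1" and b="a+1"]) (use a occ R_def in auto)
    have s0n: "s0 \<le> int n + 1" using l a occ R_def by force
    define Q where "Q j \<longleftrightarrow> 0 < j \<and> (a + j) mod ?m \<notin> occ" for j
    have qs: "Q (s0 - a)"
    proof -
      have "s0 mod ?m \<notin> occ"
      proof (cases "s0 \<le> int n")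
        case True then have "s0 mod ?m = s0" using l R_def a by simp
        then show ?thesis using l R_def by simp
      next
        case False then have "s0 = int n + 1" using s0n by simp
        then show ?thesis using occ by auto
      qed
      then show ?thesis using l R_def Q_def by simp
    qed
    have lq: "(LEAST j. Q j) = s0 - a"
    proof (rule Least_equality)
      show "Q (s0 - a)" by (rule qs)
    next
      fix y assume "Q y"
      show "s0 - a \<le> y"
      proof (rule ccontr)
        assume "\<not> s0 - a \<le> y"
        then have "a + y \<le> int n" "0 < y" using s0n \<open>Q y\<close> Q_def by auto
        then have "(a + y) mod ?m = a + y" using a by simp
        then have "R (a + y)" using \<open>Q y\<close> Q_def R_def by simp
        then show False using l \<open>\<not> s0 - a \<le> y\<close> by force
      qed
    qed
    have s: "s = s0" unfolding s_def naples_spot_def s0_def R_def using c3 by simp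
    have t: "t = s0 mod ?m" unfolding t_def cspot_def using c3 c3' amod lq[unfolded Q_def]
      by simp
    show ?thesis
    proof (cases "s0 \<le> int n")
      case True then have "s0 mod ?m = s0" using l R_def a by simp
      then show ?thesis using s t True l R_def a by auto
    next
      case False then have "s0 = int n + 1" using s0n by simp
      then show ?thesis using s t by simp
    qed
  qed
qed

lemma key:
  assumes "k \<le> n"
  shows "occ \<subseteq> {1..int n} \<Longrightarrow> set \<alpha> \<subseteq> {1..int n} \<Longrightarrow>
    (\<forall>s\<in>set (naples_park k occ \<alpha>). 1 \<le> s \<and> s \<le> int n) \<longleftrightarrow> 0 \<notin> set (cpark (int n + 1) k occ \<alpha>)"
proof (induction \<alpha> arbitrary: occ)
  case Nil show ?case by simp
next
  case (Cons a as)
  let ?s = "naples_spot k occ a" let ?t = "cspot (int n+1) k occ a"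
  have st: "((1 \<le> ?s \<and> ?s \<le> int n) \<longleftrightarrow> ?t \<noteq> 0) \<and> (1 \<le> ?s \<and> ?s \<le> int n \<longrightarrow> ?s = ?t)"
    by (rule step) (use assms Cons.prems in auto)
  show ?case
  proof (cases "1 \<le> ?s \<and> ?s \<le> int n")
    case True
    then have e: "?s = ?t" "?t \<noteq> 0" using st by auto
    have "insert ?s occ \<subseteq> {1..int n}" using True Cons.prems by auto
    from Cons.IH[OF this] Cons.prems show ?thesis using True e by (simp add: Let_def)
  next
    case False then have "?t = 0" using st by auto
    thus ?thesis using False by (auto simp add: Let_def)
  qed
qed


lemma cspot_range: "0 < m \<Longrightarrow> cspot m k occ a \<in> {0..<m}"
  unfolding cspot_def by auto

lemma cpark_range: "0 < m \<Longrightarrow> set (cpark m k occ as) \<subseteq> {0..<m}"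
proof (induction as arbitrary: occ)
  case (Cons a as)
  then show ?case using cspot_range[OF Cons.prems, of k occ a] Cons.IH[OF Cons.prems] by (auto simp: Let_def)
qed simp

lemma cpark_length: "length (cpark m k occ as) = length as"
  by (induction as arbitrary: occ) (auto simp: Let_def)

lemma cspot_notin:
  assumes m: "0 < m" and occ: "occ \<subseteq> {0..<m}" and c: "int (card occ) < m"
  shows "cspot m k occ a \<notin> occ"
proof -
  consider (c1) "a mod m \<notin> occ" | (c2) "a mod m \<in> occ" "\<exists>j\<in>{1..int k}. (a - j) mod m \<notin> occ"
    | (c3) "a mod m \<in> occ" "\<not>(\<exists>j\<in>{1..int k}. (a - j) mod m \<notin> occ)" by blast
  then show ?thesis
  proof cases
    case c1 then show ?thesis unfolding cspot_def by simp
  next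
    case c2
    then obtain j1 where "j1 \<in> {1..int k}" "(a - j1) mod m \<notin> occ" by blast
    then have "(\<lambda>j. j \<in> {1..int k} \<and> (a - j) mod m \<notin> occ) (LEAST j. j \<in> {1..int k} \<and> (a - j) mod m \<notin> occ)"
      using int_least[where P="\<lambda>j. j \<in> {1..int k} \<and> (a - j) mod m \<notin> occ" and x=j1 and b=1] by auto
    then show ?thesis using c2 unfolding cspot_def by simp
  next
    case c3
    have "finite occ" using occ finite_subset by blast
    have "card occ < card {0..<m}" using c m by simp
    then have "occ \<noteq> {0..<m}" by auto
    then obtain r where r: "r \<in> {0..<m}" "r \<notin> occ" using occ by blast
    define j where "j = (r - a) mod m"
    have "(a + j) mod m = (a + (r - a)) mod m" unfolding j_def by (rule mod_add_right_eq)
    then have ja: "(a + j) mod m = r" using r by simp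
    have "j \<noteq> 0"
    proof
      assume "j = 0" then have "a mod m = r" using ja by simp
      then show False using c3 r by simp
    qed
    moreover have "0 \<le> j" unfolding j_def using m by simp
    ultimately have "0 < j \<and> (a + j) mod m \<notin> occ" using ja r by simp
    then have "(\<lambda>j. 0 < j \<and> (a + j) mod m \<notin> occ) (LEAST j. 0 < j \<and> (a + j) mod m \<notin> occ)"
      using int_least[where P="\<lambda>j. 0 < j \<and> (a + j) mod m \<notin> occ" and x=j and b=1] by auto
    then show ?thesis using c3 unfolding cspot_def by simp
  qed
qed

lemma cpark_distinct:
  "0 < m \<Longrightarrow> occ \<subseteq> {0..<m} \<Longrightarrow> int (card occ) + int (length as) \<le> m \<Longrightarrow>
   distinct (cpark m k occ as) \<and> set (cpark m k occ as) \<inter> occ = {}"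
proof (induction as arbitrary: occ)
  case Nil then show ?case by simp
next
  case (Cons a as)
  let ?s = "cspot m k occ a"
  have fin: "finite occ" using Cons.prems finite_subset by blast
  have sn: "?s \<notin> occ" by (rule cspot_notin) (use Cons.prems in auto)
  have sr: "?s \<in> {0..<m}" using cspot_range Cons.prems by blast
  have "int (card (insert ?s occ)) + int (length as) \<le> m" using fin sn Cons.prems by simp
  then have "distinct (cpark m k (insert ?s occ) as) \<and> set (cpark m k (insert ?s occ) as) \<inter> insert ?s occ = {}"
    using Cons.IH Cons.prems sr by auto
  then show ?case using sn by (auto simp: Let_def)
qed

definition sh :: "int \<Rightarrow> int \<Rightarrow> int \<Rightarrow> int" where "sh m c x = (x + c) mod m"

lemma mem_sh:
  assumes "0 < m" "occ \<subseteq> {0..<m}"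
  shows "(y mod m \<in> sh m c ` occ) \<longleftrightarrow> ((y - c) mod m \<in> occ)"
proof
  assume "y mod m \<in> sh m c ` occ"
  then obtain q where o: "q \<in> occ" "y mod m = (q + c) mod m" by (auto simp: sh_def)
  then have "(y - c) mod m = (q + c - c) mod m" by (intro mod_diff_cong) auto
  also have "\<dots> = q" using o assms by auto
  finally show "(y - c) mod m \<in> occ" using o by simp
next
  assume "(y - c) mod m \<in> occ"
  then have "sh m c ((y - c) mod m) \<in> sh m c ` occ" by blast
  moreover have "sh m c ((y - c) mod m) = y mod m" by (simp add: sh_def mod_add_left_eq)
  ultimately show "y mod m \<in> sh m c ` occ" by simp
qed

lemma cspot_mod: "cspot m k occ (a mod m) = cspot m k occ a"
proof -
  have h1: "\<And>j. (a mod m - j) mod m = (a - j) mod m" by (simp add: mod_diff_left_eq)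
  have h2: "\<And>j. (a mod m + j) mod m = (a + j) mod m" by (simp add: mod_add_left_eq)
  show ?thesis by (simp only: cspot_def h1 h2 mod_mod_trivial)
qed

lemma cspot_sh:
  assumes "0 < m" "occ \<subseteq> {0..<m}"
  shows "cspot m k (sh m c ` occ) (a + c) = sh m c (cspot m k occ a)"
proof -
  have e1: "((a + c) mod m \<in> sh m c ` occ) \<longleftrightarrow> (a mod m \<in> occ)"
    using mem_sh[OF assms, of "a+c" c] by simp
  have e2: "\<And>j. ((a + c - j) mod m \<in> sh m c ` occ) \<longleftrightarrow> ((a - j) mod m \<in> occ)"
  proof -
    fix j show "((a + c - j) mod m \<in> sh m c ` occ) \<longleftrightarrow> ((a - j) mod m \<in> occ)"
      using mem_sh[OF assms, of "a + c - j" c] by (simp add: algebra_simps)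
  qed
  have e3: "\<And>j. ((a + c + j) mod m \<in> sh m c ` occ) \<longleftrightarrow> ((a + j) mod m \<in> occ)"
  proof -
    fix j show "((a + c + j) mod m \<in> sh m c ` occ) \<longleftrightarrow> ((a + j) mod m \<in> occ)"
      using mem_sh[OF assms, of "a + c + j" c] by (simp add: algebra_simps)
  qed
  have h4: "\<And>j. a + c - j = a - j + c" "\<And>j. a + c + j = a + j + c" by simp_all
  show ?thesis unfolding cspot_def e1 e2 e3 sh_def mod_add_left_eq
    by (simp only: h4) (simp add: mod_add_left_eq)
qed

lemma cpark_sh:
  "0 < m \<Longrightarrow> occ \<subseteq> {0..<m} \<Longrightarrow>
   cpark m k (sh m c ` occ) (map (sh m c) as) = map (sh m c) (cpark m k occ as)"
proof (induction as arbitrary: occ)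
  case Nil then show ?case by simp
next
  case (Cons a as)
  have "cspot m k (sh m c ` occ) (sh m c a) = sh m c (cspot m k occ a)"
    unfolding sh_def[of m c a] cspot_mod using cspot_sh[OF Cons.prems] by (simp add: sh_def)
  moreover have "insert (cspot m k occ a) occ \<subseteq> {0..<m}" using Cons.prems cspot_range by auto
  ultimately show ?case using Cons.IH[of "insert (cspot m k occ a) occ"] by (simp add: Let_def)
qed

lemma zero_in: "0 < m \<Longrightarrow> 0 \<in> set as \<Longrightarrow> 0 \<in> occ \<union> set (cpark m k occ as)"
proof (induction as arbitrary: occ)
  case Nil then show ?case by simp
next
  case (Cons a as)
  show ?case
  proof (cases "a = 0")
    case True
    then show ?thesis unfolding cpark.simps Let_def cspot_def by auto
  next
    case False
    then have "0 \<in> insert (cspot m k occ a) occ \<union> set (cpark m k (insert (cspot m k occ a) occ) as)"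
      using Cons.IH[of "insert (cspot m k occ a) occ"] Cons.prems False by auto
    then show ?thesis by (auto simp: Let_def)
  qed
qed

lemma sh_inj: "0 < m \<Longrightarrow> p \<in> {0..<m} \<Longrightarrow> d \<in> {0..<m} \<Longrightarrow> sh m c p = sh m c d \<Longrightarrow> p = d"
proof -
  assume a: "0 < m" "p \<in> {0..<m}" "d \<in> {0..<m}" "sh m c p = sh m c d"
  then have "(p + c - c) mod m = (d + c - c) mod m" unfolding sh_def by (intro mod_diff_cong) auto
  then show "p = d" using a by simp
qed

lemma sh_inv: "sh m (-c) (sh m c x) = x mod m" "sh m c (sh m (-c) x) = x mod m"
  by (simp_all add: sh_def mod_add_left_eq mod_diff_left_eq)


theorem lemma3p3:
  fixes n k :: nat
  assumes "k \<le> n"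
  shows "card (B n k) = (n + 1) ^ (n - 1)"
proof -
  define m where "m = int n + 1"
  have m0: "0 < m" unfolding m_def by simp
  define L where "L = {xs. set xs \<subseteq> {0..<m} \<and> length xs = n}"
  define A where "A d = {xs \<in> L. d \<notin> set (cpark m k {} xs)}" for d
  have finL: "finite L" unfolding L_def by (rule finite_lists_length_eq) simp
  have hn: "nat m = n + 1" unfolding m_def by arith
  have cardL: "card L = (n + 1) ^ n" unfolding L_def
    by (subst card_lists_length_eq) (simp_all add: hn)
  have mov: "map (sh m c) xs \<in> A (sh m c d)" if xs: "xs \<in> A d" "d \<in> {0..<m}" for xs c d
  proof -
    have sxs: "set xs \<subseteq> {0..<m}" "length xs = n" using xs unfolding A_def L_def by auto
    have r: "set (map (sh m c) xs) \<subseteq> {0..<m}" using m0 by (auto simp: sh_def)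
    have "cpark m k {} (map (sh m c) xs) = cpark m k (sh m c ` {}) (map (sh m c) xs)" by simp
    also have "\<dots> = map (sh m c) (cpark m k {} xs)" by (rule cpark_sh) (use m0 in auto)
    finally have e: "cpark m k {} (map (sh m c) xs) = map (sh m c) (cpark m k {} xs)" .
    have "sh m c d \<notin> set (map (sh m c) (cpark m k {} xs))"
    proof
      assume "sh m c d \<in> set (map (sh m c) (cpark m k {} xs))"
      then obtain p where p: "p \<in> set (cpark m k {} xs)" "sh m c d = sh m c p" by auto
      have "p \<in> {0..<m}" using cpark_range[OF m0] p by blast
      then have "p = d" using sh_inj[OF m0 \<open>p \<in> {0..<m}\<close> that(2) p(2)[symmetric]] by simp
      then show False using p xs unfolding A_def by auto
    qed
    then show ?thesis using e r sxs unfolding A_def L_def by auto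
  qed
  have sameA: "card (A c) = card (A 0)" if c: "c \<in> {0..<m}" for c
  proof -
    have "bij_betw (map (sh m c)) (A 0) (A c)"
    proof (rule bij_betw_byWitness[where f'="map (sh m (-c))"])
      show "\<forall>a\<in>A 0. map (sh m (- c)) (map (sh m c) a) = a"
      proof
        fix a assume "a \<in> A 0"
        then have "set a \<subseteq> {0..<m}" unfolding A_def L_def by auto
        then show "map (sh m (- c)) (map (sh m c) a) = a" by (induction a) (auto simp: sh_inv)
      qed
      show "\<forall>a\<in>A c. map (sh m c) (map (sh m (- c)) a) = a"
      proof
        fix a assume "a \<in> A c"
        then have "set a \<subseteq> {0..<m}" unfolding A_def L_def by auto
        then show "map (sh m c) (map (sh m (- c)) a) = a" by (induction a) (auto simp: sh_inv)
      qed
      have "sh m c 0 = c" using c by (simp add: sh_def)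
      then show "map (sh m c) ` A 0 \<subseteq> A c"
      proof (intro image_subsetI)
        fix xs assume "xs \<in> A 0"
        then show "map (sh m c) xs \<in> A c" using mov[of xs 0 c] m0 \<open>sh m c 0 = c\<close> by simp
      qed
      have "sh m (-c) c = 0" by (simp add: sh_def)
      then show "map (sh m (-c)) ` A c \<subseteq> A 0"
      proof (intro image_subsetI)
        fix xs assume "xs \<in> A c"
        then show "map (sh m (-c)) xs \<in> A 0" using mov[of xs c "-c"] c \<open>sh m (-c) c = 0\<close> by simp
      qed
    qed
    then show ?thesis by (rule bij_betw_same_card[symmetric])
  qed
  have uniq: "\<exists>e. {0..<m} - set (cpark m k {} xs) = {e}" if "xs \<in> L" for xs
  proof -
    let ?P = "cpark m k {} xs"
    have "int (card ({}::int set)) + int (length xs) \<le> m" using that unfolding L_def m_def by simp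
    then have d: "distinct ?P" using cpark_distinct[OF m0, of "{}" xs k] by simp
    have "length ?P = n" using that unfolding L_def by (simp add: cpark_length)
    then have cP: "card (set ?P) = n" using distinct_card[OF d] by simp
    have "card ({0..<m} - set ?P) = card {0..<m} - card (set ?P)"
      by (rule card_Diff_subset) (simp_all add: cpark_range[OF m0])
    also have "\<dots> = 1" using cP by (simp add: m_def)
    finally obtain e where "{0..<m} - set ?P = {e}" by (rule card_1_singletonE)
    then show ?thesis by blast
  qed
  have Lu: "L = (\<Union>c\<in>{0..<m}. A c)"
  proof
    show "L \<subseteq> (\<Union>c\<in>{0..<m}. A c)"
    proof
      fix xs assume "xs \<in> L"
      then obtain e where "{0..<m} - set (cpark m k {} xs) = {e}" using uniq by blast
      then show "xs \<in> (\<Union>c\<in>{0..<m}. A c)" using \<open>xs \<in> L\<close> unfolding A_def by blast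
    qed
  qed (auto simp: A_def)
  have "card L = (\<Sum>c\<in>{0..<m}. card (A c))"
    unfolding Lu
  proof (rule card_UN_disjoint)
    show "finite {0..<m}" by simp
    show "\<forall>i\<in>{0..<m}. finite (A i)" using finL unfolding A_def by auto
    show "\<forall>i\<in>{0..<m}. \<forall>j\<in>{0..<m}. i \<noteq> j \<longrightarrow> A i \<inter> A j = {}"
    proof (intro ballI impI)
      fix i j assume ij: "i \<in> {0..<m}" "j \<in> {0..<m}" "i \<noteq> j"
      show "A i \<inter> A j = {}"
      proof (rule ccontr)
        assume "A i \<inter> A j \<noteq> {}"
        then obtain xs where xs: "xs \<in> A i" "xs \<in> A j" by blast
        then obtain e where e: "{0..<m} - set (cpark m k {} xs) = {e}" using uniq unfolding A_def by blast
        have "i \<in> {0..<m} - set (cpark m k {} xs)" "j \<in> {0..<m} - set (cpark m k {} xs)"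
          using xs ij unfolding A_def by auto
        then show False using e ij(3) by auto
      qed
    qed
  qed
  also have "\<dots> = (\<Sum>c\<in>{0..<m}. card (A 0))" by (intro sum.cong refl sameA)
  also have "\<dots> = (n + 1) * card (A 0)" using hn by simp
  finally have eq: "(n + 1) * card (A 0) = (n + 1) ^ n" using cardL by simp
  have BA: "B n k = A 0"
  proof
    show "B n k \<subseteq> A 0"
    proof
      fix xs assume "xs \<in> B n k"
      then have x: "length xs = n" "set xs \<subseteq> {1..int n}"
        "\<forall>s\<in>set (naples_park k {} xs). 1 \<le> s \<and> s \<le> int n"
        unfolding B_def PP_def by auto
      then have "0 \<notin> set (cpark (int n + 1) k {} xs)" using key[OF assms, of "{}" xs] by simp
      then show "xs \<in> A 0" using x unfolding A_def L_def m_def by auto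
    qed
  next
    show "A 0 \<subseteq> B n k"
    proof
      fix xs assume "xs \<in> A 0"
      then have x: "length xs = n" "set xs \<subseteq> {0..<m}" "0 \<notin> set (cpark m k {} xs)"
        unfolding A_def L_def by auto
      have "0 \<notin> set xs" using zero_in[OF m0, of xs "{}" k] x by auto
      have s: "set xs \<subseteq> {1..int n}"
      proof
        fix y assume "y \<in> set xs"
        then have "y \<in> {0..<m}" "y \<noteq> 0" using x(2) \<open>0 \<notin> set xs\<close> by auto
        then show "y \<in> {1..int n}" unfolding m_def by auto
      qed
      then have "\<forall>s\<in>set (naples_park k {} xs). 1 \<le> s \<and> s \<le> int n"
        using key[OF assms, of "{}" xs] x(3) unfolding m_def by simp
      then show "xs \<in> B n k" using s x unfolding B_def PP_def by auto
    qed
  qed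
  show ?thesis
  proof (cases n)
    case 0 then show ?thesis using eq BA by simp
  next
    case (Suc n')
    have "(n + 1) ^ n = (n + 1) * (n + 1) ^ (n - 1)" using Suc by (metis diff_Suc_1 power_Suc)
    then have "(n + 1) * card (A 0) = (n + 1) * (n + 1) ^ (n - 1)" using eq by simp
    then have "card (A 0) = (n + 1) ^ (n - 1)" by (rule mult_left_cancel[THEN iffD1, rotated]) simp
    then show ?thesis using BA by simp
  qed
qed

end
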